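(* Let $P:\mathcal{C}^{\mathrm{op}}\to\mathbf{Hey}$ be a Gödel hyperdoctrine such that the bottom element $\bot$ is a quantifier-free predicate. Then $P$ satisfies Markov's Rule: for all objects $A,B$ of $\mathcal{C}$ and every quantifier-free $\alpha_D\in P(A\times B)$, if \[ b:B\;|\;\top\vdash\neg\forall a.\alpha_D(a,b)\] then \[ b:B\;|\;\top\vdash\exists a.\neg\alpha_D(a,b).\]
   Context: A hyperdoctrine is a functor $P:\mathcal{C}^{\mathrm{op}}\to\mathbf{Hey}$ from a cartesian closed category $\mathcal{C}$ to Heyting algebras such that each $P_f$ has a left adjoint $\exists_f$ and a right adjoint $\forall_f$ satisfying Beck–Chevalley. A Gödel hyperdoctrine is a hyperdoctrine which (as a functor to $\mathbf{Pos}$) is a Gödel doctrine. $\neg\phi$ denotes $\phi\rightarrow\bot$. A doctrine $P:\mathcal{C}^{\mathrm{op}}\to\mathbf{Pos}$ ($\mathcal{C}$ with finite products) is existential/universal if reindexing along each product projection $\pi$ has a left adjoint $\exists_\pi$ / right adjoint $\forall_\pi$ satisfying Beck–Chevalley along pullbacks of projections. Notation: $b:B\;|\;\phi\vdash\psi$ means $\phi\le\psi$ in $P(B)$; $\exists a.\psi(a,b)$, $\forall a.\psi(a,b)$ denote the quantifiers along the projection $A\times B\to B$; substitution is reindexing. In an existential doctrine, $\alpha\in P(I)$ is existential-free if for every $f:A\to I$, every $B$ and every $\beta\in P(A\times B)$ with $P_f\alpha\le\exists_{\pi_A}\beta$ there is $g:A\to B$ with $P_f\alpha\le P_{\langle1_A,g\rangle}\beta$.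 In a universal doctrine $Q$, $\alpha\in Q(I)$ is universal-free if for every $f:A\to I$, every $B$ and every $\beta\in Q(A\times B)$ with $\forall_{\pi_A}\beta\le Q_f\alpha$ there is $g:A\to B$ with $Q_{\langle1_A,g\rangle}\beta\le Q_f\alpha$. Enough existential-free (universal-free) predicates: every $\alpha\in P(I)$ equals $\exists_{\pi_I}\beta$ (resp. $\forall_{\pi_I}\beta$) for some $A$ and existential-free (universal-free) $\beta\in P(I\times A)$. A Gödel doctrine: (1) $\mathcal{C}$ cartesian closed; (2) $P$ existential and universal; (3) $P$ has enough existential-free predicates; (4) existential-free predicates are stable under $\forall_\pi$ for projections $\pi$; (5) the sub-doctrine $P'$ of existential-free predicates (a universal doctrine) has enough universal-free predicates. A predicate is quantifier-free if it is existential-free in $P$ and universal-free in $P'$; "$\bot$ is quantifier-free" means $\bot\in P(I)$ is quantifier-free for every object $I$. *)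

theory Defs
  imports Main
begin

section \<open>Categories (single-sorted encoding: every element of 'm is an arrow)\<close>

record ('o, 'm) ccat =
  cdom  :: "'m \<Rightarrow> 'o"
  ccod  :: "'m \<Rightarrow> 'o"
  ccomp :: "'m \<Rightarrow> 'm \<Rightarrow> 'm"   (* ccomp g f = g \<circ> f *)
  cid   :: "'o \<Rightarrow> 'm"
  cone  :: "'o"                     (* terminal object *)
  cprod :: "'o \<Rightarrow> 'o \<Rightarrow> 'o"
  cpr1  :: "'o \<Rightarrow> 'o \<Rightarrow> 'm"
  cpr2  :: "'o \<Rightarrow> 'o \<Rightarrow> 'm"
  cexp  :: "'o \<Rightarrow> 'o \<Rightarrow> 'o"         (* cexp B D = D^B *)
  cev   :: "'o \<Rightarrow> 'o \<Rightarrow> 'm"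

definition hom :: "('o, 'm, 'x) ccat_scheme \<Rightarrow> 'm \<Rightarrow> 'o \<Rightarrow> 'o \<Rightarrow> bool" where
  "hom C f A B \<longleftrightarrow> cdom C f = A \<and> ccod C f = B"

definition category :: "('o, 'm, 'x) ccat_scheme \<Rightarrow> bool" where
  "category C \<longleftrightarrow>
     (\<forall>f g. ccod C f = cdom C g \<longrightarrow> hom C (ccomp C g f) (cdom C f) (ccod C g)) \<and>
     (\<forall>A. hom C (cid C A) A A) \<and>
     (\<forall>f. ccomp C f (cid C (cdom C f)) = f \<and> ccomp C (cid C (ccod C f)) f = f) \<and>
     (\<forall>f g h. ccod C f = cdom C g \<and> ccod C g = cdom C h \<longrightarrow>
        ccomp C h (ccomp C g f) = ccomp C (ccomp C h g) f)"

definition cartesian :: "('o, 'm, 'x) ccat_scheme \<Rightarrow> bool" where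
  "cartesian C \<longleftrightarrow> category C \<and>
     (\<forall>A. \<exists>!t. hom C t A (cone C)) \<and>
     (\<forall>A B. hom C (cpr1 C A B) (cprod C A B) A \<and> hom C (cpr2 C A B) (cprod C A B) B \<and>
        (\<forall>D f g. hom C f D A \<and> hom C g D B \<longrightarrow>
           (\<exists>!h. hom C h D (cprod C A B) \<and> ccomp C (cpr1 C A B) h = f \<and> ccomp C (cpr2 C A B) h = g)))"

definition pair :: "('o, 'm, 'x) ccat_scheme \<Rightarrow> 'm \<Rightarrow> 'm \<Rightarrow> 'm" where
  "pair C f g = (THE h. hom C h (cdom C f) (cprod C (ccod C f) (ccod C g)) \<and>
                   ccomp C (cpr1 C (ccod C f) (ccod C g)) h = f \<and>
                   ccomp C (cpr2 C (ccod C f) (ccod C g)) h = g)"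

definition cartesian_closed :: "('o, 'm, 'x) ccat_scheme \<Rightarrow> bool" where
  "cartesian_closed C \<longleftrightarrow> cartesian C \<and>
     (\<forall>B D. hom C (cev C B D) (cprod C (cexp C B D) B) D \<and>
        (\<forall>A f. hom C f (cprod C A B) D \<longrightarrow>
           (\<exists>!h. hom C h A (cexp C B D) \<and>
              ccomp C (cev C B D) (pair C (ccomp C h (cpr1 C A B)) (cpr2 C A B)) = f)))"

definition is_pullback :: "('o, 'm, 'x) ccat_scheme \<Rightarrow> 'm \<Rightarrow> 'm \<Rightarrow> 'm \<Rightarrow> 'm \<Rightarrow> bool" where
  "is_pullback C f g p q \<longleftrightarrow>
     ccod C f = ccod C g \<and> cdom C p = cdom C q \<and> ccod C p = cdom C f \<and> ccod C q = cdom C g \<and>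
     ccomp C f p = ccomp C g q \<and>
     (\<forall>u v. cdom C u = cdom C v \<and> ccod C u = cdom C f \<and> ccod C v = cdom C g \<and>
            ccomp C f u = ccomp C g v \<longrightarrow>
        (\<exists>!h. hom C h (cdom C u) (cdom C p) \<and> ccomp C p h = u \<and> ccomp C q h = v))"

record ('o, 'm, 'p) hdoc =
  pc    :: "'o \<Rightarrow> 'p set"                 (* carrier of P(I) *)
  ple   :: "'o \<Rightarrow> 'p \<Rightarrow> 'p \<Rightarrow> bool"
  ptop  :: "'o \<Rightarrow> 'p"
  pbot  :: "'o \<Rightarrow> 'p"
  pconj :: "'o \<Rightarrow> 'p \<Rightarrow> 'p \<Rightarrow> 'p"
  pdisj :: "'o \<Rightarrow> 'p \<Rightarrow> 'p \<Rightarrow> 'p"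
  pimp  :: "'o \<Rightarrow> 'p \<Rightarrow> 'p \<Rightarrow> 'p"
  preidx :: "'m \<Rightarrow> 'p \<Rightarrow> 'p"             (* P_f : P(cod f) \<rightarrow> P(dom f) *)
  pex   :: "'m \<Rightarrow> 'p \<Rightarrow> 'p"              (* \<exists>_f : P(dom f) \<rightarrow> P(cod f) *)
  pall  :: "'m \<Rightarrow> 'p \<Rightarrow> 'p"              (* \<forall>_f : P(dom f) \<rightarrow> P(cod f) *)

definition heyting_fibre :: "('o, 'm, 'p, 'x) hdoc_scheme \<Rightarrow> 'o \<Rightarrow> bool" where
  "heyting_fibre P I \<longleftrightarrow>
     (\<forall>x\<in>pc P I. ple P I x x) \<and>
     (\<forall>x\<in>pc P I. \<forall>y\<in>pc P I. \<forall>z\<in>pc P I. ple P I x y \<and> ple P I y z \<longrightarrow> ple P I x z) \<and>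
     (\<forall>x\<in>pc P I. \<forall>y\<in>pc P I. ple P I x y \<and> ple P I y x \<longrightarrow> x = y) \<and>
     ptop P I \<in> pc P I \<and> pbot P I \<in> pc P I \<and>
     (\<forall>x\<in>pc P I. ple P I x (ptop P I) \<and> ple P I (pbot P I) x) \<and>
     (\<forall>x\<in>pc P I. \<forall>y\<in>pc P I.
        pconj P I x y \<in> pc P I \<and> pdisj P I x y \<in> pc P I \<and> pimp P I x y \<in> pc P I) \<and>
     (\<forall>x\<in>pc P I. \<forall>y\<in>pc P I. \<forall>z\<in>pc P I.
        (ple P I z (pconj P I x y) \<longleftrightarrow> ple P I z x \<and> ple P I z y) \<and>
        (ple P I (pdisj P I x y) z \<longleftrightarrow> ple P I x z \<and> ple P I y z) \<and>
        (ple P I (pconj P I z x) y \<longleftrightarrow> ple P I z (pimp P I x y)))"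

definition hyperdoctrine :: "('o, 'm, 'x) ccat_scheme \<Rightarrow> ('o, 'm, 'p, 'y) hdoc_scheme \<Rightarrow> bool" where
  "hyperdoctrine C P \<longleftrightarrow> cartesian_closed C \<and>
     (\<forall>I. heyting_fibre P I) \<and>
     \<comment> \<open>P is a functor C^op \<rightarrow> Hey\<close>
     (\<forall>f x. x \<in> pc P (ccod C f) \<longrightarrow> preidx P f x \<in> pc P (cdom C f)) \<and>
     (\<forall>A. \<forall>x\<in>pc P A. preidx P (cid C A) x = x) \<and>
     (\<forall>f g. ccod C f = cdom C g \<longrightarrow>
        (\<forall>x\<in>pc P (ccod C g). preidx P (ccomp C g f) x = preidx P f (preidx P g x))) \<and>
     (\<forall>f. preidx P f (ptop P (ccod C f)) = ptop P (cdom C f) \<and>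
          preidx P f (pbot P (ccod C f)) = pbot P (cdom C f) \<and>
          (\<forall>x\<in>pc P (ccod C f). \<forall>y\<in>pc P (ccod C f).
             preidx P f (pconj P (ccod C f) x y) = pconj P (cdom C f) (preidx P f x) (preidx P f y) \<and>
             preidx P f (pdisj P (ccod C f) x y) = pdisj P (cdom C f) (preidx P f x) (preidx P f y) \<and>
             preidx P f (pimp P (ccod C f) x y) = pimp P (cdom C f) (preidx P f x) (preidx P f y))) \<and>
     \<comment> \<open>left and right adjoints to every reindexing\<close>
     (\<forall>f. \<forall>x\<in>pc P (cdom C f).
        pex P f x \<in> pc P (ccod C f) \<and> pall P f x \<in> pc P (ccod C f) \<and>
        (\<forall>y\<in>pc P (ccod C f).
           (ple P (ccod C f) (pex P f x) y \<longleftrightarrow> ple P (cdom C f) x (preidx P f y)) \<and>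
           (ple P (ccod C f) y (pall P f x) \<longleftrightarrow> ple P (cdom C f) (preidx P f y) x))) \<and>
     \<comment> \<open>Beck--Chevalley\<close>
     (\<forall>f g p q. is_pullback C f g p q \<longrightarrow>
        (\<forall>x\<in>pc P (cdom C f).
           preidx P g (pex P f x) = pex P q (preidx P p x) \<and>
           preidx P g (pall P f x) = pall P q (preidx P p x)))"

definition existential_free :: "('o, 'm, 'x) ccat_scheme \<Rightarrow> ('o, 'm, 'p, 'y) hdoc_scheme \<Rightarrow> 'o \<Rightarrow> 'p \<Rightarrow> bool" where
  "existential_free C P I \<alpha> \<longleftrightarrow> \<alpha> \<in> pc P I \<and>
     (\<forall>A f B \<beta>. hom C f A I \<and> \<beta> \<in> pc P (cprod C A B) \<and>
        ple P A (preidx P f \<alpha>) (pex P (cpr1 C A B) \<beta>) \<longrightarrow>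
        (\<exists>g. hom C g A B \<and> ple P A (preidx P f \<alpha>) (preidx P (pair C (cid C A) g) \<beta>)))"

text \<open>Universal-free predicates of the sub-doctrine P' of existential-free predicates.\<close>
definition universal_free' :: "('o, 'm, 'x) ccat_scheme \<Rightarrow> ('o, 'm, 'p, 'y) hdoc_scheme \<Rightarrow> 'o \<Rightarrow> 'p \<Rightarrow> bool" where
  "universal_free' C P I \<alpha> \<longleftrightarrow> existential_free C P I \<alpha> \<and>
     (\<forall>A f B \<beta>. hom C f A I \<and> existential_free C P (cprod C A B) \<beta> \<and>
        ple P A (pall P (cpr1 C A B) \<beta>) (preidx P f \<alpha>) \<longrightarrow>
        (\<exists>g. hom C g A B \<and> ple P A (preidx P (pair C (cid C A) g) \<beta>) (preidx P f \<alpha>)))"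

definition quantifier_free :: "('o, 'm, 'x) ccat_scheme \<Rightarrow> ('o, 'm, 'p, 'y) hdoc_scheme \<Rightarrow> 'o \<Rightarrow> 'p \<Rightarrow> bool" where
  "quantifier_free C P I \<alpha> \<longleftrightarrow> existential_free C P I \<alpha> \<and> universal_free' C P I \<alpha>"

definition goedel_hyperdoctrine :: "('o, 'm, 'x) ccat_scheme \<Rightarrow> ('o, 'm, 'p, 'y) hdoc_scheme \<Rightarrow> bool" where
  "goedel_hyperdoctrine C P \<longleftrightarrow> hyperdoctrine C P \<and>
     \<comment> \<open>(3) enough existential-free predicates\<close>
     (\<forall>I. \<forall>\<alpha>\<in>pc P I. \<exists>A \<beta>. existential_free C P (cprod C I A) \<beta> \<and> \<alpha> = pex P (cpr1 C I A) \<beta>) \<and>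
     \<comment> \<open>(4) existential-free predicates are stable under universal quantification along projections\<close>
     (\<forall>A B \<beta>. existential_free C P (cprod C A B) \<beta> \<longrightarrow>
        existential_free C P A (pall P (cpr1 C A B) \<beta>) \<and>
        existential_free C P B (pall P (cpr2 C A B) \<beta>)) \<and>
     \<comment> \<open>(5) P' has enough universal-free predicates\<close>
     (\<forall>I \<alpha>. existential_free C P I \<alpha> \<longrightarrow>
        (\<exists>A \<beta>. universal_free' C P (cprod C I A) \<beta> \<and> \<alpha> = pall P (cpr1 C I A) \<beta>))"

definition pneg :: "('o, 'm, 'p, 'y) hdoc_scheme \<Rightarrow> 'o \<Rightarrow> 'p \<Rightarrow> 'p" where
  "pneg P I x = pimp P I x (pbot P I)"

end

theory Submission
  imports Defs
begin

lemma cart_cat: "cartesian C \<Longrightarrow> category C"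
  unfolding cartesian_def by blast

lemma cat_comp:
  assumes "cartesian C" "hom C f X Y" "hom C g Y Z"
  shows "hom C (ccomp C g f) X Z"
proof -
  have "\<forall>f g. ccod C f = cdom C g \<longrightarrow> hom C (ccomp C g f) (cdom C f) (ccod C g)"
    using cart_cat[OF assms(1)] unfolding category_def by blast
  then show ?thesis using assms(2,3) unfolding hom_def by auto
qed

lemma cat_assoc:
  assumes "cartesian C" "hom C f X Y" "hom C g Y Z" "hom C h Z W"
  shows "ccomp C h (ccomp C g f) = ccomp C (ccomp C h g) f"
proof -
  have "\<forall>f g h. ccod C f = cdom C g \<and> ccod C g = cdom C h \<longrightarrow>
        ccomp C h (ccomp C g f) = ccomp C (ccomp C h g) f"
    using cart_cat[OF assms(1)] unfolding category_def by blast
  then show ?thesis using assms(2,3,4) unfolding hom_def by auto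
qed

lemma cat_idr:
  assumes "cartesian C" "hom C f X Y"
  shows "ccomp C f (cid C X) = f"
proof -
  have "\<forall>f. ccomp C f (cid C (cdom C f)) = f"
    using cart_cat[OF assms(1)] unfolding category_def by blast
  then show ?thesis using assms(2) unfolding hom_def by auto
qed

lemma cat_id:
  assumes "cartesian C"
  shows "hom C (cid C X) X X"
  using cart_cat[OF assms] unfolding category_def by blast

lemma pr1_hom: "cartesian C \<Longrightarrow> hom C (cpr1 C A B) (cprod C A B) A"
  unfolding cartesian_def by blast
lemma pr2_hom: "cartesian C \<Longrightarrow> hom C (cpr2 C A B) (cprod C A B) B"
  unfolding cartesian_def by blast

lemma pair_props:
  assumes "cartesian C" "hom C f D X" "hom C g D Y"
  shows "hom C (pair C f g) D (cprod C X Y) \<and> ccomp C (cpr1 C X Y) (pair C f g) = f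
     \<and> ccomp C (cpr2 C X Y) (pair C f g) = g"
proof -
  have ex: "\<exists>!h. hom C h D (cprod C X Y) \<and> ccomp C (cpr1 C X Y) h = f \<and> ccomp C (cpr2 C X Y) h = g"
    using assms unfolding cartesian_def by blast
  have "pair C f g = (THE h. hom C h D (cprod C X Y) \<and> ccomp C (cpr1 C X Y) h = f \<and> ccomp C (cpr2 C X Y) h = g)"
    using assms(2,3) unfolding pair_def hom_def by simp
  then show ?thesis using theI'[OF ex] by simp
qed

lemma prod_ext:
  assumes "cartesian C" "hom C h D (cprod C X Y)" "hom C k D (cprod C X Y)"
    "ccomp C (cpr1 C X Y) h = ccomp C (cpr1 C X Y) k"
    "ccomp C (cpr2 C X Y) h = ccomp C (cpr2 C X Y) k"
  shows "h = k"
proof -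
  have f: "hom C (ccomp C (cpr1 C X Y) h) D X" using cat_comp[OF assms(1,2) pr1_hom[OF assms(1)]] .
  have g: "hom C (ccomp C (cpr2 C X Y) h) D Y" using cat_comp[OF assms(1,2) pr2_hom[OF assms(1)]] .
  have ex: "\<exists>!u. hom C u D (cprod C X Y) \<and> ccomp C (cpr1 C X Y) u = ccomp C (cpr1 C X Y) h
     \<and> ccomp C (cpr2 C X Y) u = ccomp C (cpr2 C X Y) h"
    using assms(1) f g unfolding cartesian_def by blast
  then obtain u where u: "\<And>v. hom C v D (cprod C X Y) \<and> ccomp C (cpr1 C X Y) v = ccomp C (cpr1 C X Y) h
     \<and> ccomp C (cpr2 C X Y) v = ccomp C (cpr2 C X Y) h \<Longrightarrow> v = u"
    by blast
  have "h = u" by (rule u) (simp add: assms(2))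
  moreover have "k = u" by (rule u) (simp add: assms(3,4,5))
  ultimately show ?thesis by simp
qed

lemma hfD1: "heyting_fibre P I \<Longrightarrow> \<forall>x\<in>pc P I. ple P I x x"
  unfolding heyting_fibre_def by (elim conjE) assumption
lemma hfD2: "heyting_fibre P I \<Longrightarrow> \<forall>x\<in>pc P I. \<forall>y\<in>pc P I. \<forall>z\<in>pc P I. ple P I x y \<and> ple P I y z \<longrightarrow> ple P I x z"
  unfolding heyting_fibre_def by (elim conjE) assumption
lemma hfD3: "heyting_fibre P I \<Longrightarrow> \<forall>x\<in>pc P I. \<forall>y\<in>pc P I. ple P I x y \<and> ple P I y x \<longrightarrow> x = y"
  unfolding heyting_fibre_def by (elim conjE) assumption
lemma hfD4: "heyting_fibre P I \<Longrightarrow> ptop P I \<in> pc P I"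
  unfolding heyting_fibre_def by (elim conjE) assumption
lemma hfD5: "heyting_fibre P I \<Longrightarrow> pbot P I \<in> pc P I"
  unfolding heyting_fibre_def by (elim conjE) assumption
lemma hfD6: "heyting_fibre P I \<Longrightarrow> \<forall>x\<in>pc P I. ple P I x (ptop P I) \<and> ple P I (pbot P I) x"
  unfolding heyting_fibre_def by (elim conjE) assumption
lemma hfD7: "heyting_fibre P I \<Longrightarrow> \<forall>x\<in>pc P I. \<forall>y\<in>pc P I.
        pconj P I x y \<in> pc P I \<and> pdisj P I x y \<in> pc P I \<and> pimp P I x y \<in> pc P I"
  unfolding heyting_fibre_def by (elim conjE) assumption
lemma hfD8: "heyting_fibre P I \<Longrightarrow> \<forall>x\<in>pc P I. \<forall>y\<in>pc P I. \<forall>z\<in>pc P I.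
        (ple P I z (pconj P I x y) \<longleftrightarrow> ple P I z x \<and> ple P I z y) \<and>
        (ple P I (pdisj P I x y) z \<longleftrightarrow> ple P I x z \<and> ple P I y z) \<and>
        (ple P I (pconj P I z x) y \<longleftrightarrow> ple P I z (pimp P I x y))"
  unfolding heyting_fibre_def by (elim conjE) assumption

lemma hf_refl: "heyting_fibre P I \<Longrightarrow> x \<in> pc P I \<Longrightarrow> ple P I x x"
proof -
  assume h: "heyting_fibre P I" and x: "x \<in> pc P I"
  show ?thesis using bspec[OF hfD1[OF h] x] .
qed

lemma hf_trans: "heyting_fibre P I \<Longrightarrow> x \<in> pc P I \<Longrightarrow> y \<in> pc P I \<Longrightarrow> z \<in> pc P I
   \<Longrightarrow> ple P I x y \<Longrightarrow> ple P I y z \<Longrightarrow> ple P I x z"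
proof -
  assume h: "heyting_fibre P I" and x: "x \<in> pc P I" and y: "y \<in> pc P I" and z: "z \<in> pc P I"
    and "ple P I x y" "ple P I y z"
  then show ?thesis using bspec[OF bspec[OF bspec[OF hfD2[OF h] x] y] z] by simp
qed

lemma hf_antisym: "heyting_fibre P I \<Longrightarrow> x \<in> pc P I \<Longrightarrow> y \<in> pc P I
   \<Longrightarrow> ple P I x y \<Longrightarrow> ple P I y x \<Longrightarrow> x = y"
proof -
  assume h: "heyting_fibre P I" and x: "x \<in> pc P I" and y: "y \<in> pc P I"
    and "ple P I x y" "ple P I y x"
  then show ?thesis using bspec[OF bspec[OF hfD3[OF h] x] y] by simp
qed

lemma hf_mem: "heyting_fibre P I \<Longrightarrow> ptop P I \<in> pc P I \<and> pbot P I \<in> pc P I"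
proof -
  assume h: "heyting_fibre P I"
  show ?thesis using hfD4[OF h] hfD5[OF h] by simp
qed

lemma hf_top: "heyting_fibre P I \<Longrightarrow> x \<in> pc P I \<Longrightarrow> ple P I x (ptop P I)"
proof -
  assume h: "heyting_fibre P I" and x: "x \<in> pc P I"
  show ?thesis using bspec[OF hfD6[OF h] x] by simp
qed

lemma hf_ops: "heyting_fibre P I \<Longrightarrow> x \<in> pc P I \<Longrightarrow> y \<in> pc P I \<Longrightarrow>
        pconj P I x y \<in> pc P I \<and> pdisj P I x y \<in> pc P I \<and> pimp P I x y \<in> pc P I"
proof -
  assume h: "heyting_fibre P I" and x: "x \<in> pc P I" and y: "y \<in> pc P I"
  show ?thesis using bspec[OF bspec[OF hfD7[OF h] x] y] .
qed

lemma hf_conj: "heyting_fibre P I \<Longrightarrow> x \<in> pc P I \<Longrightarrow> y \<in> pc P I \<Longrightarrow> z \<in> pc P I \<Longrightarrow>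
        (ple P I z (pconj P I x y) \<longleftrightarrow> ple P I z x \<and> ple P I z y)"
proof -
  assume h: "heyting_fibre P I" and x: "x \<in> pc P I" and y: "y \<in> pc P I" and z: "z \<in> pc P I"
  show ?thesis using bspec[OF bspec[OF bspec[OF hfD8[OF h] x] y] z] by (rule conjunct1)
qed

lemma hf_imp: "heyting_fibre P I \<Longrightarrow> x \<in> pc P I \<Longrightarrow> y \<in> pc P I \<Longrightarrow> z \<in> pc P I \<Longrightarrow>
        (ple P I (pconj P I z x) y \<longleftrightarrow> ple P I z (pimp P I x y))"
proof -
  assume h: "heyting_fibre P I" and x: "x \<in> pc P I" and y: "y \<in> pc P I" and z: "z \<in> pc P I"
  show ?thesis using bspec[OF bspec[OF bspec[OF hfD8[OF h] x] y] z] by simp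
qed

lemma hf_neg_top:
  assumes H: "heyting_fibre P I" and x: "x \<in> pc P I" and le: "ple P I (ptop P I) (pimp P I x (pbot P I))"
  shows "ple P I x (pbot P I)"
proof -
  have t: "ptop P I \<in> pc P I" and b: "pbot P I \<in> pc P I" using hf_mem[OF H] by auto
  have c: "pconj P I (ptop P I) x \<in> pc P I" using hf_ops[OF H t x] by auto
  have 1: "ple P I (pconj P I (ptop P I) x) (pbot P I)" using hf_imp[OF H x b t] le by simp
  have 2: "ple P I x (pconj P I (ptop P I) x)"
    using hf_conj[OF H t x x] hf_top[OF H x] hf_refl[OF H x] by simp
  show ?thesis using hf_trans[OF H x c b 2 1] .
qed

lemma hf_top_neg:
  assumes H: "heyting_fibre P I" and x: "x \<in> pc P I" and le: "ple P I x (pbot P I)"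
  shows "ple P I (ptop P I) (pimp P I x (pbot P I))"
proof -
  have t: "ptop P I \<in> pc P I" and b: "pbot P I \<in> pc P I" using hf_mem[OF H] by auto
  have c: "pconj P I (ptop P I) x \<in> pc P I" using hf_ops[OF H t x] by auto
  have 2: "ple P I (pconj P I (ptop P I) x) x"
    using hf_conj[OF H t x c] hf_refl[OF H c] by simp
  have "ple P I (pconj P I (ptop P I) x) (pbot P I)" using hf_trans[OF H c x b 2 le] .
  then show ?thesis using hf_imp[OF H x b t] by simp
qed

lemma hdD1: "hyperdoctrine C P \<Longrightarrow> cartesian_closed C"
  unfolding hyperdoctrine_def by (elim conjE) assumption

lemma hdD2: "hyperdoctrine C P \<Longrightarrow> \<forall>I. heyting_fibre P I"
  unfolding hyperdoctrine_def by (elim conjE) assumption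

lemma hdD3: "hyperdoctrine C P \<Longrightarrow> \<forall>f x. x \<in> pc P (ccod C f) \<longrightarrow> preidx P f x \<in> pc P (cdom C f)"
  unfolding hyperdoctrine_def by (elim conjE) assumption

lemma hdD4: "hyperdoctrine C P \<Longrightarrow> \<forall>A. \<forall>x\<in>pc P A. preidx P (cid C A) x = x"
  unfolding hyperdoctrine_def by (elim conjE) assumption

lemma hdD5: "hyperdoctrine C P \<Longrightarrow> \<forall>f g. ccod C f = cdom C g \<longrightarrow>
        (\<forall>x\<in>pc P (ccod C g). preidx P (ccomp C g f) x = preidx P f (preidx P g x))"
  unfolding hyperdoctrine_def by (elim conjE) assumption

lemma hdD6: "hyperdoctrine C P \<Longrightarrow> \<forall>f. preidx P f (ptop P (ccod C f)) = ptop P (cdom C f) \<and>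
          preidx P f (pbot P (ccod C f)) = pbot P (cdom C f) \<and>
          (\<forall>x\<in>pc P (ccod C f). \<forall>y\<in>pc P (ccod C f).
             preidx P f (pconj P (ccod C f) x y) = pconj P (cdom C f) (preidx P f x) (preidx P f y) \<and>
             preidx P f (pdisj P (ccod C f) x y) = pdisj P (cdom C f) (preidx P f x) (preidx P f y) \<and>
             preidx P f (pimp P (ccod C f) x y) = pimp P (cdom C f) (preidx P f x) (preidx P f y))"
  unfolding hyperdoctrine_def by (elim conjE) assumption

lemma hdD7: "hyperdoctrine C P \<Longrightarrow> \<forall>f. \<forall>x\<in>pc P (cdom C f).
        pex P f x \<in> pc P (ccod C f) \<and> pall P f x \<in> pc P (ccod C f) \<and>
        (\<forall>y\<in>pc P (ccod C f).
           (ple P (ccod C f) (pex P f x) y \<longleftrightarrow> ple P (cdom C f) x (preidx P f y)) \<and>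
           (ple P (ccod C f) y (pall P f x) \<longleftrightarrow> ple P (cdom C f) (preidx P f y) x))"
  unfolding hyperdoctrine_def by (elim conjE) assumption

lemma hd_cart: "hyperdoctrine C P \<Longrightarrow> cartesian C"
proof -
  assume h: "hyperdoctrine C P"
  show ?thesis using hdD1[OF h] unfolding cartesian_closed_def by (rule conjunct1)
qed

lemma hd_fib: "hyperdoctrine C P \<Longrightarrow> heyting_fibre P I"
proof -
  assume h: "hyperdoctrine C P"
  show ?thesis using hdD2[OF h] by (rule spec)
qed

lemma hd_mem: "hyperdoctrine C P \<Longrightarrow> hom C f X Y \<Longrightarrow> x \<in> pc P Y \<Longrightarrow> preidx P f x \<in> pc P X"
proof -
  assume h: "hyperdoctrine C P" and f: "hom C f X Y" and x: "x \<in> pc P Y"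
  have "x \<in> pc P (ccod C f) \<longrightarrow> preidx P f x \<in> pc P (cdom C f)" using hdD3[OF h] by simp
  then show ?thesis using f x unfolding hom_def by simp
qed

lemma hd_id: "hyperdoctrine C P \<Longrightarrow> x \<in> pc P A \<Longrightarrow> preidx P (cid C A) x = x"
proof -
  assume h: "hyperdoctrine C P" and x: "x \<in> pc P A"
  show ?thesis using bspec[OF spec[OF hdD4[OF h]] x] .
qed

lemma hd_comp: "hyperdoctrine C P \<Longrightarrow> hom C f X Y \<Longrightarrow> hom C g Y Z \<Longrightarrow> x \<in> pc P Z
   \<Longrightarrow> preidx P (ccomp C g f) x = preidx P f (preidx P g x)"
proof -
  assume h: "hyperdoctrine C P" and f: "hom C f X Y" and g: "hom C g Y Z" and x: "x \<in> pc P Z"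
  have "ccod C f = cdom C g \<longrightarrow>
        (\<forall>x\<in>pc P (ccod C g). preidx P (ccomp C g f) x = preidx P f (preidx P g x))"
    using hdD5[OF h] by simp
  then show ?thesis using f g x unfolding hom_def by simp
qed

lemma hd_bot: "hyperdoctrine C P \<Longrightarrow> hom C f X Y \<Longrightarrow> preidx P f (pbot P Y) = pbot P X"
proof -
  assume h: "hyperdoctrine C P" and f: "hom C f X Y"
  have "preidx P f (pbot P (ccod C f)) = pbot P (cdom C f)" using spec[OF hdD6[OF h], of f] by simp
  then show ?thesis using f unfolding hom_def by simp
qed

lemma hd_ops: "hyperdoctrine C P \<Longrightarrow> hom C f X Y \<Longrightarrow> x \<in> pc P Y \<Longrightarrow> y \<in> pc P Y \<Longrightarrow>
   preidx P f (pconj P Y x y) = pconj P X (preidx P f x) (preidx P f y) \<and>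
   preidx P f (pimp P Y x y) = pimp P X (preidx P f x) (preidx P f y)"
proof -
  assume h: "hyperdoctrine C P" and f: "hom C f X Y" and x: "x \<in> pc P Y" and y: "y \<in> pc P Y"
  have dc: "cdom C f = X" "ccod C f = Y" using f unfolding hom_def by auto
  have "\<forall>x\<in>pc P (ccod C f). \<forall>y\<in>pc P (ccod C f).
             preidx P f (pconj P (ccod C f) x y) = pconj P (cdom C f) (preidx P f x) (preidx P f y) \<and>
             preidx P f (pdisj P (ccod C f) x y) = pdisj P (cdom C f) (preidx P f x) (preidx P f y) \<and>
             preidx P f (pimp P (ccod C f) x y) = pimp P (cdom C f) (preidx P f x) (preidx P f y)"
    using spec[OF hdD6[OF h], of f] by simp
  then have "\<forall>x\<in>pc P Y. \<forall>y\<in>pc P Y.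
             preidx P f (pconj P Y x y) = pconj P X (preidx P f x) (preidx P f y) \<and>
             preidx P f (pdisj P Y x y) = pdisj P X (preidx P f x) (preidx P f y) \<and>
             preidx P f (pimp P Y x y) = pimp P X (preidx P f x) (preidx P f y)"
    unfolding dc .
  then show ?thesis using x y by simp
qed

lemma hd_adj: "hyperdoctrine C P \<Longrightarrow> hom C f X Y \<Longrightarrow> x \<in> pc P X \<Longrightarrow>
   pex P f x \<in> pc P Y \<and> pall P f x \<in> pc P Y \<and>
        (\<forall>y\<in>pc P Y.
           (ple P Y (pex P f x) y \<longleftrightarrow> ple P X x (preidx P f y)) \<and>
           (ple P Y y (pall P f x) \<longleftrightarrow> ple P X (preidx P f y) x))"
proof -
  assume h: "hyperdoctrine C P" and f: "hom C f X Y" and x: "x \<in> pc P X"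
  have dc: "cdom C f = X" "ccod C f = Y" using f unfolding hom_def by auto
  have "\<forall>x\<in>pc P (cdom C f).
        pex P f x \<in> pc P (ccod C f) \<and> pall P f x \<in> pc P (ccod C f) \<and>
        (\<forall>y\<in>pc P (ccod C f).
           (ple P (ccod C f) (pex P f x) y \<longleftrightarrow> ple P (cdom C f) x (preidx P f y)) \<and>
           (ple P (ccod C f) y (pall P f x) \<longleftrightarrow> ple P (cdom C f) (preidx P f y) x))"
    using spec[OF hdD7[OF h], of f] .
  then have "\<forall>x\<in>pc P X.
        pex P f x \<in> pc P Y \<and> pall P f x \<in> pc P Y \<and>
        (\<forall>y\<in>pc P Y.
           (ple P Y (pex P f x) y \<longleftrightarrow> ple P X x (preidx P f y)) \<and>
           (ple P Y y (pall P f x) \<longleftrightarrow> ple P X (preidx P f y) x))"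
    unfolding dc .
  then show ?thesis using x by (rule bspec)
qed

lemma hd_mono:
  assumes H: "hyperdoctrine C P" and f: "hom C f X Y" and x: "x \<in> pc P Y" and y: "y \<in> pc P Y"
    and le: "ple P Y x y"
  shows "ple P X (preidx P f x) (preidx P f y)"
proof -
  have FY: "heyting_fibre P Y" and FX: "heyting_fibre P X" using hd_fib[OF H] by auto
  have c: "pconj P Y x y \<in> pc P Y" using hf_ops[OF FY x y] by blast
  have a1: "ple P Y x (pconj P Y x y)" using hf_conj[OF FY x y x] hf_refl[OF FY x] le by blast
  have a2: "ple P Y (pconj P Y x y) x" using hf_conj[OF FY x y c] hf_refl[OF FY c] by blast
  have eq: "x = pconj P Y x y" using hf_antisym[OF FY x c a1 a2] .
  have px: "preidx P f x \<in> pc P X" and py: "preidx P f y \<in> pc P X" using hd_mem[OF H f] x y by auto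
  define u where "u = pconj P X (preidx P f x) (preidx P f y)"
  have u: "u \<in> pc P X" unfolding u_def using hf_ops[OF FX px py] by blast
  have "preidx P f x = preidx P f (pconj P Y x y)" using arg_cong[OF eq] .
  also have "\<dots> = u" unfolding u_def using hd_ops[OF H f x y] by blast
  finally have e2: "preidx P f x = u" .
  have "ple P X u (preidx P f y)"
    using hf_conj[OF FX px py u] hf_refl[OF FX u] unfolding u_def by blast
  then show ?thesis using e2 by simp
qed

lemma ef_reidx:
  assumes H: "hyperdoctrine C P" and sw: "hom C s J I" and ef: "existential_free C P I \<alpha>"
  shows "existential_free C P J (preidx P s \<alpha>)"
proof -
  have cart: "cartesian C" using hd_cart[OF H] .
  have am: "\<alpha> \<in> pc P I" using ef unfolding existential_free_def by simp
  have efa: "\<forall>A f B \<beta>. hom C f A I \<and> \<beta> \<in> pc P (cprod C A B) \<and>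
        ple P A (preidx P f \<alpha>) (pex P (cpr1 C A B) \<beta>) \<longrightarrow>
        (\<exists>g. hom C g A B \<and> ple P A (preidx P f \<alpha>) (preidx P (pair C (cid C A) g) \<beta>))"
    using ef unfolding existential_free_def by simp
  show ?thesis unfolding existential_free_def
  proof (intro conjI allI impI)
    show "preidx P s \<alpha> \<in> pc P J" using hd_mem[OF H sw am] .
  next
    fix A f B \<beta>
    assume a: "hom C f A J \<and> \<beta> \<in> pc P (cprod C A B) \<and>
         ple P A (preidx P f (preidx P s \<alpha>)) (pex P (cpr1 C A B) \<beta>)"
    have sf: "hom C (ccomp C s f) A I" using cat_comp[OF cart _ sw] a by blast
    have eq: "preidx P (ccomp C s f) \<alpha> = preidx P f (preidx P s \<alpha>)"
      using hd_comp[OF H _ sw am] a by blast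
    have "\<exists>g. hom C g A B \<and> ple P A (preidx P (ccomp C s f) \<alpha>) (preidx P (pair C (cid C A) g) \<beta>)"
      using spec[OF spec[OF spec[OF spec[OF efa, of A], of "ccomp C s f"], of B], of \<beta>] sf a eq by simp
    then show "\<exists>g. hom C g A B \<and> ple P A (preidx P f (preidx P s \<alpha>)) (preidx P (pair C (cid C A) g) \<beta>)"
      using eq by simp
  qed
qed

theorem corollary1:
  fixes C :: "('o, 'm, 'x) ccat_scheme" and P :: "('o, 'm, 'p, 'y) hdoc_scheme"
  assumes "goedel_hyperdoctrine C P"
    and "\<forall>I. quantifier_free C P I (pbot P I)"
  shows "\<forall>A B \<alpha>. quantifier_free C P (cprod C A B) \<alpha> \<longrightarrow>
           ple P B (ptop P B) (pneg P B (pall P (cpr2 C A B) \<alpha>)) \<longrightarrow>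
           ple P B (ptop P B) (pex P (cpr2 C A B) (pneg P (cprod C A B) \<alpha>))"
proof (intro allI impI)
  fix A B \<alpha>
  assume qf: "quantifier_free C P (cprod C A B) \<alpha>"
    and hyp: "ple P B (ptop P B) (pneg P B (pall P (cpr2 C A B) \<alpha>))"
  have H: "hyperdoctrine C P" using assms(1) unfolding goedel_hyperdoctrine_def by simp
  have cart: "cartesian C" using hd_cart[OF H] .
  have ef: "existential_free C P (cprod C A B) \<alpha>" using qf unfolding quantifier_free_def by simp
  have am: "\<alpha> \<in> pc P (cprod C A B)" using ef unfolding existential_free_def by simp
  have FB: "heyting_fibre P B" and FAB: "heyting_fibre P (cprod C A B)" using hd_fib[OF H] by auto
  have botB: "pbot P B \<in> pc P B" and topB: "ptop P B \<in> pc P B" using hf_mem[OF FB] by auto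
  have botAB: "pbot P (cprod C A B) \<in> pc P (cprod C A B)" using hf_mem[OF FAB] by auto
  define p1 where "p1 = cpr1 C A B"
  define p2 where "p2 = cpr2 C A B"
  define q1 where "q1 = cpr1 C B A"
  define q2 where "q2 = cpr2 C B A"
  have p1: "hom C p1 (cprod C A B) A" unfolding p1_def using pr1_hom[OF cart] .
  have p2: "hom C p2 (cprod C A B) B" unfolding p2_def using pr2_hom[OF cart] .
  have q1: "hom C q1 (cprod C B A) B" unfolding q1_def using pr1_hom[OF cart] .
  have q2: "hom C q2 (cprod C B A) A" unfolding q2_def using pr2_hom[OF cart] .
  define sw where "sw = pair C q2 q1"
  define sw' where "sw' = pair C p2 p1"
  have swp: "hom C sw (cprod C B A) (cprod C A B) \<and> ccomp C p1 sw = q2 \<and> ccomp C p2 sw = q1"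
    unfolding sw_def p1_def p2_def using pair_props[OF cart q2 q1] .
  have sw: "hom C sw (cprod C B A) (cprod C A B)" using swp by simp
  have swp': "hom C sw' (cprod C A B) (cprod C B A) \<and> ccomp C q1 sw' = p2 \<and> ccomp C q2 sw' = p1"
    unfolding sw'_def q1_def q2_def using pair_props[OF cart p2 p1] .
  have sw': "hom C sw' (cprod C A B) (cprod C B A)" using swp' by simp
  have ss: "hom C (ccomp C sw sw') (cprod C A B) (cprod C A B)" using cat_comp[OF cart sw' sw] .
  have idAB: "hom C (cid C (cprod C A B)) (cprod C A B) (cprod C A B)" using cat_id[OF cart] .
  have "ccomp C p1 (ccomp C sw sw') = ccomp C (ccomp C p1 sw) sw'" using cat_assoc[OF cart sw' sw p1] .
  also have "\<dots> = p1" using swp swp' by simp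
  also have "\<dots> = ccomp C p1 (cid C (cprod C A B))" using cat_idr[OF cart p1] by simp
  finally have e1: "ccomp C p1 (ccomp C sw sw') = ccomp C p1 (cid C (cprod C A B))" .
  have "ccomp C p2 (ccomp C sw sw') = ccomp C (ccomp C p2 sw) sw'" using cat_assoc[OF cart sw' sw p2] .
  also have "\<dots> = p2" using swp swp' by simp
  also have "\<dots> = ccomp C p2 (cid C (cprod C A B))" using cat_idr[OF cart p2] by simp
  finally have e2: "ccomp C p2 (ccomp C sw sw') = ccomp C p2 (cid C (cprod C A B))" .
  have swsw: "ccomp C sw sw' = cid C (cprod C A B)"
    using prod_ext[OF cart ss idAB] e1 e2 unfolding p1_def p2_def by simp
  define \<beta> where "\<beta> = preidx P sw \<alpha>"
  have bm: "\<beta> \<in> pc P (cprod C B A)" unfolding \<beta>_def using hd_mem[OF H sw am] .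
  have efb: "existential_free C P (cprod C B A) \<beta>" unfolding \<beta>_def using ef_reidx[OF H sw ef] .
  define u where "u = pall P p2 \<alpha>"
  have u: "u \<in> pc P B" unfolding u_def using hd_adj[OF H p2 am] by simp
  have ubot: "ple P B u (pbot P B)"
    using hf_neg_top[OF FB u] hyp unfolding u_def p2_def pneg_def by simp
  define v where "v = pall P q1 \<beta>"
  have v: "v \<in> pc P B" unfolding v_def using hd_adj[OF H q1 bm] by simp
  have c1: "ple P (cprod C B A) (preidx P q1 v) \<beta>"
    using hd_adj[OF H q1 bm] v hf_refl[OF FB v] unfolding v_def by simp
  have q1v: "preidx P q1 v \<in> pc P (cprod C B A)" using hd_mem[OF H q1 v] .
  have c2: "ple P (cprod C A B) (preidx P sw' (preidx P q1 v)) (preidx P sw' \<beta>)"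
    using hd_mono[OF H sw' q1v bm c1] .
  have c3: "preidx P sw' (preidx P q1 v) = preidx P p2 v"
    using hd_comp[OF H sw' q1 v] swp' by simp
  have c4: "preidx P sw' \<beta> = \<alpha>"
    unfolding \<beta>_def using hd_comp[OF H sw' sw am] swsw hd_id[OF H am] by simp
  have "ple P (cprod C A B) (preidx P p2 v) \<alpha>" using c2 c3 c4 by simp
  then have vu: "ple P B v u" unfolding u_def using hd_adj[OF H p2 am] v by simp
  have vbot: "ple P B v (pbot P B)" using hf_trans[OF FB v u botB vu ubot] .
  have idB: "hom C (cid C B) B B" using cat_id[OF cart] .
  have bb: "preidx P (cid C B) (pbot P B) = pbot P B" using hd_id[OF H botB] .
  have uf: "universal_free' C P B (pbot P B)" using assms(2) unfolding quantifier_free_def by simp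
  have "\<forall>A' f B' \<beta>'. hom C f A' B \<and> existential_free C P (cprod C A' B') \<beta>' \<and>
        ple P A' (pall P (cpr1 C A' B') \<beta>') (preidx P f (pbot P B)) \<longrightarrow>
        (\<exists>g. hom C g A' B' \<and> ple P A' (preidx P (pair C (cid C A') g) \<beta>') (preidx P f (pbot P B)))"
    using uf unfolding universal_free'_def by simp
  then have "\<exists>g. hom C g B A \<and> ple P B (preidx P (pair C (cid C B) g) \<beta>) (preidx P (cid C B) (pbot P B))"
    using idB efb vbot bb unfolding v_def q1_def
    by (metis (no_types, lifting))
  then obtain g where g: "hom C g B A" and gle: "ple P B (preidx P (pair C (cid C B) g) \<beta>) (pbot P B)"
    using bb by auto
  define k where "k = pair C (cid C B) g"
  have kp: "hom C k B (cprod C B A) \<and> ccomp C q1 k = cid C B"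
    unfolding k_def q1_def using pair_props[OF cart idB g] by simp
  have k: "hom C k B (cprod C B A)" using kp by simp
  define h where "h = ccomp C sw k"
  have h: "hom C h B (cprod C A B)" unfolding h_def using cat_comp[OF cart k sw] .
  have p2h: "ccomp C p2 h = cid C B"
    unfolding h_def using cat_assoc[OF cart k sw p2] swp kp by simp
  have hal: "preidx P h \<alpha> = preidx P k \<beta>" unfolding h_def \<beta>_def using hd_comp[OF H k sw am] .
  have ham: "preidx P h \<alpha> \<in> pc P B" using hd_mem[OF H h am] .
  have hbot: "ple P B (preidx P h \<alpha>) (pbot P B)" using gle hal unfolding k_def by simp
  define n where "n = pneg P (cprod C A B) \<alpha>"
  have n: "n \<in> pc P (cprod C A B)" unfolding n_def pneg_def using hf_ops[OF FAB am botAB] by simp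
  define e where "e = pex P p2 n"
  have e: "e \<in> pc P B" unfolding e_def using hd_adj[OF H p2 n] by simp
  have ne: "ple P (cprod C A B) n (preidx P p2 e)"
    using hd_adj[OF H p2 n] e hf_refl[OF FB e] unfolding e_def by simp
  have p2e: "preidx P p2 e \<in> pc P (cprod C A B)" using hd_mem[OF H p2 e] .
  have hn_le: "ple P B (preidx P h n) (preidx P h (preidx P p2 e))" using hd_mono[OF H h n p2e ne] .
  have "preidx P h (preidx P p2 e) = preidx P (ccomp C p2 h) e" using hd_comp[OF H h p2 e] by simp
  also have "\<dots> = e" using p2h hd_id[OF H e] by simp
  finally have hpe: "preidx P h (preidx P p2 e) = e" .
  have hn: "preidx P h n = pimp P B (preidx P h \<alpha>) (pbot P B)"
    unfolding n_def pneg_def using hd_ops[OF H h am botAB] hd_bot[OF H h] by simp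
  have hnm: "preidx P h n \<in> pc P B" using hd_mem[OF H h n] .
  have top_hn: "ple P B (ptop P B) (preidx P h n)" using hf_top_neg[OF FB ham hbot] hn by simp
  have "ple P B (ptop P B) e" using hf_trans[OF FB topB hnm e top_hn] hn_le hpe by simp
  then show "ple P B (ptop P B) (pex P (cpr2 C A B) (pneg P (cprod C A B) \<alpha>))"
    unfolding e_def n_def p2_def .
qed

end
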